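(* For any finite poset $(X,\leqslant)$ and any derivation out-tree $T=(X,E)$, the pair $(T,\phi_E)$ is a tree-based enforcement scheme.
   Context: For a digraph $G$, $x\rightsquigarrow_G y$ means there is a directed path from $x$ to $y$ in $G$ (with $x\rightsquigarrow_G x$ always). A derivation out-tree for $(X,\leqslant)$ is a spanning out-tree $T=(X,E)$ (rooted tree on vertex set $X$ with arcs oriented away from the root) such that $xy\in E$ implies $y<x$; its root $r$ is the maximum element of $X$. Define $\phi_E\colon X\to2^X$ by $\phi_E(r)=\{r\}$ and, for $x\neq r$, $\phi_E(x)=\{z\in X:\exists y\in X \text{ with } yz\in E,\ x\geqslant z,\ x\not\geqslant y\}$. A tree-based enforcement scheme is a pair $(T,\phi)$ with $T$ a derivation out-tree and $\phi\colon X\to2^X$ such that for all $x\in X$: $x\in\phi(x)$; if $u\leqslant x$ then some $z\in\phi(x)$ has $z\rightsquigarrow_T u$; if $u\not\leqslant x$ then no $z\in\phi(x)$ has $z\rightsquigarrow_T u$. *)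

theory Defs
  imports Main
begin

definition partial_order_on_set :: "'a set \<Rightarrow> ('a \<Rightarrow> 'a \<Rightarrow> bool) \<Rightarrow> bool" where
  "partial_order_on_set X le \<longleftrightarrow>
     (\<forall>x\<in>X. le x x) \<and>
     (\<forall>x\<in>X. \<forall>y\<in>X. le x y \<and> le y x \<longrightarrow> x = y) \<and>
     (\<forall>x\<in>X. \<forall>y\<in>X. \<forall>z\<in>X. le x y \<and> le y z \<longrightarrow> le x z)"

definition reach :: "('a \<times> 'a) set \<Rightarrow> 'a \<Rightarrow> 'a \<Rightarrow> bool" where
  "reach E x y \<longleftrightarrow> (x, y) \<in> E\<^sup>*"

definition spanning_out_tree :: "'a set \<Rightarrow> ('a \<times> 'a) set \<Rightarrow> 'a \<Rightarrow> bool" where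
  "spanning_out_tree X E r \<longleftrightarrow>
     E \<subseteq> X \<times> X \<and> r \<in> X \<and>
     (\<forall>y. (y, r) \<notin> E) \<and>
     (\<forall>x\<in>X. x \<noteq> r \<longrightarrow> (\<exists>!y. (y, x) \<in> E)) \<and>
     (\<forall>x\<in>X. reach E r x)"

definition derivation_out_tree :: "'a set \<Rightarrow> ('a \<Rightarrow> 'a \<Rightarrow> bool) \<Rightarrow> ('a \<times> 'a) set \<Rightarrow> 'a \<Rightarrow> bool" where
  "derivation_out_tree X le E r \<longleftrightarrow>
     spanning_out_tree X E r \<and> (\<forall>(x, y)\<in>E. le y x \<and> y \<noteq> x)"

definition phi_E :: "'a set \<Rightarrow> ('a \<Rightarrow> 'a \<Rightarrow> bool) \<Rightarrow> ('a \<times> 'a) set \<Rightarrow> 'a \<Rightarrow> 'a \<Rightarrow> 'a set" where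
  "phi_E X le E r x =
     (if x = r then {r}
      else {z \<in> X. \<exists>y\<in>X. (y, z) \<in> E \<and> le z x \<and> \<not> le y x})"

definition tree_based_enforcement_scheme ::
  "'a set \<Rightarrow> ('a \<Rightarrow> 'a \<Rightarrow> bool) \<Rightarrow> ('a \<times> 'a) set \<Rightarrow> 'a \<Rightarrow> ('a \<Rightarrow> 'a set) \<Rightarrow> bool" where
  "tree_based_enforcement_scheme X le E r \<phi> \<longleftrightarrow>
     derivation_out_tree X le E r \<and>
     (\<forall>x\<in>X. \<phi> x \<subseteq> X) \<and>
     (\<forall>x\<in>X. x \<in> \<phi> x \<and>
        (\<forall>u\<in>X. le u x \<longrightarrow> (\<exists>z\<in>\<phi> x. reach E z u)) \<and>
        (\<forall>u\<in>X. \<not> le u x \<longrightarrow> \<not> (\<exists>z\<in>\<phi> x. reach E z u)))"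

end

theory Submission
  imports Defs
begin

lemma reach_le:
  assumes po: "partial_order_on_set X le" and dt: "derivation_out_tree X le E r"
    and z: "z \<in> X" and rc: "(z, u) \<in> E\<^sup>*"
  shows "u \<in> X \<and> le u z"
  using rc
proof (induction rule: rtrancl_induct)
  case base
  then show ?case using z po unfolding partial_order_on_set_def by blast
next
  case (step w v)
  have E: "E \<subseteq> X \<times> X" and arc: "\<forall>(x, y)\<in>E. le y x \<and> y \<noteq> x"
    using dt unfolding derivation_out_tree_def spanning_out_tree_def by auto
  have "v \<in> X" "le v w" using step E arc by auto
  then show ?case using step po z unfolding partial_order_on_set_def by blast
qed

theorem lemma2:
  fixes X :: "'a set" and le :: "'a \<Rightarrow> 'a \<Rightarrow> bool" and E :: "('a \<times> 'a) set" and r :: 'a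
  assumes "finite X"
    and "partial_order_on_set X le"
    and "derivation_out_tree X le E r"
  shows "tree_based_enforcement_scheme X le E r (phi_E X le E r)"
proof -
  note po = assms(2) and dt = assms(3)
  have E: "E \<subseteq> X \<times> X" and arc: "\<forall>(x, y)\<in>E. le y x \<and> y \<noteq> x"
    and rX: "r \<in> X" and par: "\<forall>x\<in>X. x \<noteq> r \<longrightarrow> (\<exists>!y. (y, x) \<in> E)"
    and rr: "\<forall>x\<in>X. reach E r x"
    using dt unfolding derivation_out_tree_def spanning_out_tree_def by auto
  have refl: "\<forall>x\<in>X. le x x" and anti: "\<forall>x\<in>X. \<forall>y\<in>X. le x y \<and> le y x \<longrightarrow> x = y"
    and trans: "\<forall>x\<in>X. \<forall>y\<in>X. \<forall>z\<in>X. le x y \<and> le y z \<longrightarrow> le x z"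
    using po unfolding partial_order_on_set_def by (blast, blast, blast)
  have leR: "le u r" if "u \<in> X" for u
    using reach_le[OF po dt rX] rr that unfolding reach_def by blast
  have A: "\<forall>x\<in>X. phi_E X le E r x \<subseteq> X"
    using rX unfolding phi_E_def by auto
  have B: "x \<in> phi_E X le E r x \<and>
        (\<forall>u\<in>X. le u x \<longrightarrow> (\<exists>z\<in>phi_E X le E r x. reach E z u)) \<and>
        (\<forall>u\<in>X. \<not> le u x \<longrightarrow> \<not> (\<exists>z\<in>phi_E X le E r x. reach E z u))" if x: "x \<in> X" for x
  proof (cases "x = r")
    case True
    then show ?thesis using rr leR unfolding phi_E_def by auto
  next
    case False
    have phi: "phi_E X le E r x = {z \<in> X. \<exists>y\<in>X. (y, z) \<in> E \<and> le z x \<and> \<not> le y x}"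
      using False unfolding phi_E_def by simp
    obtain y where y: "(y, x) \<in> E" using par x False by blast
    have yX: "y \<in> X" "le x y" "x \<noteq> y" using y E arc by auto
    have "\<not> le y x" using anti x yX by blast
    hence c1: "x \<in> phi_E X le E r x" using phi x yX y refl by auto
    have rnot: "\<not> le r x" using anti leR x rX False by blast
    have c2: "le u x \<longrightarrow> (\<exists>z\<in>phi_E X le E r x. reach E z u)" if "(r, u) \<in> E\<^sup>*" for u
      using that
    proof (induction rule: rtrancl_induct)
      case base
      then show ?case using rnot by simp
    next
      case (step w v)
      have wX: "w \<in> X" "v \<in> X" using step E by auto
      show ?case
      proof
        assume lv: "le v x"
        show "\<exists>z\<in>phi_E X le E r x. reach E z v"
        proof (cases "le w x")
          case True
          then obtain z where "z \<in> phi_E X le E r x" "reach E z w" using step by blast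
          then show ?thesis using step(2) unfolding reach_def by (meson rtrancl_into_rtrancl)
        next
          case False
          have "v \<in> phi_E X le E r x" using phi wX step(2) lv False by auto
          then show ?thesis unfolding reach_def by blast
        qed
      qed
    qed
    have c3: "\<not> (\<exists>z\<in>phi_E X le E r x. reach E z u)" if "u \<in> X" "\<not> le u x" for u
    proof
      assume "\<exists>z\<in>phi_E X le E r x. reach E z u"
      then obtain z where z: "z \<in> X" "le z x" "reach E z u" using phi by auto
      have "le u z" "u \<in> X" using reach_le[OF po dt z(1)] z(3) unfolding reach_def by auto
      then show False using trans z x that by blast
    qed
    have c2': "\<forall>u\<in>X. le u x \<longrightarrow> (\<exists>z\<in>phi_E X le E r x. reach E z u)"
    proof (intro ballI impI)
      fix u assume "u \<in> X" "le u x"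
      then have "(r, u) \<in> E\<^sup>*" using rr unfolding reach_def by blast
      then show "\<exists>z\<in>phi_E X le E r x. reach E z u" using c2 \<open>le u x\<close> by blast
    qed
    show ?thesis using c1 c2' c3 by blast
  qed
  show ?thesis unfolding tree_based_enforcement_scheme_def using dt A B by blast
qed

end
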